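(* Let $A\subset\mathbb{R}^d$ be a finite set of sites in general position. For all $r\in[0,\infty)$ and $k\in\mathbb{N}$: (1) the vertex sets of $\textnormal{S-Rhomb}_{r,k}$ and $\textnormal{S-Del}_{r,k}$ are equal (identifying the vertex $(\sum_{a\in v}a,-|v|)$ of the rhomboid tiling with the subset $v\subseteq A$); (2) the vertices of each sliced rhomboid in $\textnormal{S-Rhomb}_{r,k}$ span a simplex in $\textnormal{S-Del}_{r,k}$; (3) the vertices of each simplex in $\textnormal{S-Del}_{r,k}$ are contained in a sliced rhomboid of $\textnormal{S-Rhomb}_{r,k}$.
   Context: $\mathbb{N}=\{1,2,\dots\}$. Simplicial side: for $\tilde A\subseteq A$ let $\mathrm{Ball}_r(\tilde A)=\{b: \|b-\tilde a\|\le r\ \forall\tilde a\in\tilde A\}$ and for $|\tilde A|=k$ let $\mathrm{Vor}(\tilde A)=\{b\in\mathbb{R}^d: \|b-\tilde a\|\le\|b-a\|\ \forall\tilde a\in\tilde A, a\in A\setminus\tilde A\}$. Let $\mathrm{Del}^{+}_{r,k}$ be the abstract simplicial complex whose vertices are subsets $\tilde A\subseteq A$ with $|\tilde A|\in\{k,k+1\}$ and $\mathrm{Ball}_r(\tilde A)\cap\mathrm{Vor}(\tilde A)\neq\emptyset$, and whose simplices are the sets $\sigma$ of such subsets with $\bigcap_{\tilde A\in\sigma}(\mathrm{Ball}_r(\tilde A)\cap\mathrm{Vor}(\tilde A))\neq\emptyset$; $\textnormal{S-Del}_{r,k}=\bigcup_{i\ge k}\mathrm{Del}^{+}_{r,i}$.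 Rhomboid side: a $(d-1)$-sphere $S\subset\mathbb{R}^d$ partitions $A=A_{in}\sqcup A_{on}\sqcup A_{out}$ (sites inside, on, outside $S$). The combinatorial rhomboid of $S$ is $\rho_S=\{A_{in}\cup Q: Q\subseteq A_{on}\}$; its elements are (combinatorial) vertices. A vertex $v=\{a_1,\dots,a_m\}$ is embedded as the point $(\sum_i a_i,-m)\in\mathbb{R}^{d+1}$ ($m$ is its depth), and the geometric rhomboid of $S$ is the convex hull of its embedded vertices. The rhomboid tiling $\mathrm{Rhomb}$ is the polyhedral complex of all rhomboids $\rho_S$, $S$ ranging over spheres. For a rhomboid $\rho$, $r_\rho$ is the infimum of radii of spheres $S$ with $\rho_S=\rho$. The sliced rhomboid tiling $\textnormal{S-Rhomb}$ is the polyhedral complex obtained by cutting every rhomboid along the hyperplanes $\{x_{d+1}=-j\}$, $j=0,\dots,|A|$; its cells (sliced rhomboids) are the intersections of rhomboids with these hyperplanes and with the slabs $\{j\le -x_{d+1}\le j+1\}$. For a sliced rhomboid $\rho$, $k_\rho$ is the minimum depth of its vertices and $r_\rho:=r_{\rho'}$ where $\rho'$ is the smallest-dimensional rhomboid containing $\rho$. $\textnormal{S-Rhomb}_{r,k}=\{\rho\in\textnormal{S-Rhomb}: r_\rho\le r, k_\rho\ge k\}$. *)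

theory Defs
  imports "HOL-Analysis.Analysis"
begin

text \<open>Sites live in an abstract Euclidean space 'a, d = DIM('a).\<close>

definition gen_pos :: "'a::euclidean_space set \<Rightarrow> bool" where
  "gen_pos A \<longleftrightarrow> finite A
     \<and> (\<forall>B\<subseteq>A. card B \<le> DIM('a) + 1 \<longrightarrow> \<not> affine_dependent B)
     \<and> (\<forall>B\<subseteq>A. card B = DIM('a) + 2 \<longrightarrow> \<not> (\<exists>c \<rho>. \<rho> > 0 \<and> B \<subseteq> sphere c \<rho>))"

definition BallR :: "real \<Rightarrow> 'a::euclidean_space set \<Rightarrow> 'a set" where
  "BallR r B = {b. \<forall>a\<in>B. dist b a \<le> r}"

definition Vor :: "'a::euclidean_space set \<Rightarrow> 'a set \<Rightarrow> 'a set" where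
  "Vor A B = {b. \<forall>a\<in>B. \<forall>a'\<in>A - B. dist b a \<le> dist b a'}"

definition BV :: "'a::euclidean_space set \<Rightarrow> real \<Rightarrow> 'a set \<Rightarrow> 'a set" where
  "BV A r B = BallR r B \<inter> Vor A B"

definition Del_plus_vertices :: "'a::euclidean_space set \<Rightarrow> real \<Rightarrow> nat \<Rightarrow> 'a set set" where
  "Del_plus_vertices A r k = {B. B \<subseteq> A \<and> card B \<in> {k, k + 1} \<and> BV A r B \<noteq> {}}"

definition Del_plus :: "'a::euclidean_space set \<Rightarrow> real \<Rightarrow> nat \<Rightarrow> 'a set set set" where
  "Del_plus A r k = {\<sigma>. \<sigma> \<noteq> {} \<and> \<sigma> \<subseteq> Del_plus_vertices A r k \<and> (\<Inter>B\<in>\<sigma>. BV A r B) \<noteq> {}}"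

definition SDel :: "'a::euclidean_space set \<Rightarrow> real \<Rightarrow> nat \<Rightarrow> 'a set set set" where
  "SDel A r k = (\<Union>i\<in>{k..}. Del_plus A r i)"

definition SDel_vertices :: "'a::euclidean_space set \<Rightarrow> real \<Rightarrow> nat \<Rightarrow> 'a set set" where
  "SDel_vertices A r k = (\<Union>i\<in>{k..}. Del_plus_vertices A r i)"

definition A_in :: "'a::euclidean_space set \<Rightarrow> 'a \<Rightarrow> real \<Rightarrow> 'a set" where
  "A_in A c \<rho> = {a\<in>A. dist a c < \<rho>}"

definition A_on :: "'a::euclidean_space set \<Rightarrow> 'a \<Rightarrow> real \<Rightarrow> 'a set" where
  "A_on A c \<rho> = {a\<in>A. dist a c = \<rho>}"

definition rhomb :: "'a::euclidean_space set \<Rightarrow> 'a \<Rightarrow> real \<Rightarrow> 'a set set" where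
  "rhomb A c \<rho> = {A_in A c \<rho> \<union> Q | Q. Q \<subseteq> A_on A c \<rho>}"

definition Rhombs :: "'a::euclidean_space set \<Rightarrow> 'a set set set" where
  "Rhombs A = {rhomb A c \<rho> | c \<rho>. \<rho> > 0}"

definition r_rhomb :: "'a::euclidean_space set \<Rightarrow> 'a set set \<Rightarrow> real" where
  "r_rhomb A R = Inf {\<rho>. \<rho> > 0 \<and> (\<exists>c. rhomb A c \<rho> = R)}"

definition emb :: "'a::euclidean_space set \<Rightarrow> 'a \<times> real" where
  "emb v = ((\<Sum>a\<in>v. a), - real (card v))"

definition ghull :: "'a::euclidean_space set set \<Rightarrow> ('a \<times> real) set" where
  "ghull R = convex hull (emb ` R)"

definition SRcells :: "'a::euclidean_space set \<Rightarrow> ('a \<times> real) set set" where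
  "SRcells A = {P. P \<noteq> {} \<and> (\<exists>R\<in>Rhombs A. \<exists>j::nat.
       P = ghull R \<inter> {x. snd x = - real j}
     \<or> P = ghull R \<inter> {x. real j \<le> - snd x \<and> - snd x \<le> real j + 1})}"

definition cellverts :: "'a::euclidean_space set \<Rightarrow> ('a \<times> real) set \<Rightarrow> 'a set set" where
  "cellverts A P = {v \<in> \<Union>(Rhombs A). emb v extreme_point_of P}"

definition k_cell :: "'a::euclidean_space set \<Rightarrow> ('a \<times> real) set \<Rightarrow> nat" where
  "k_cell A P = Min (card ` cellverts A P)"

definition min_rhomb :: "'a::euclidean_space set \<Rightarrow> ('a \<times> real) set \<Rightarrow> 'a set set" where
  "min_rhomb A P = (ARG_MIN (\<lambda>R. aff_dim (ghull R)) R. R \<in> Rhombs A \<and> P \<subseteq> ghull R)"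

definition r_cell :: "'a::euclidean_space set \<Rightarrow> ('a \<times> real) set \<Rightarrow> real" where
  "r_cell A P = r_rhomb A (min_rhomb A P)"

definition SRhomb :: "'a::euclidean_space set \<Rightarrow> real \<Rightarrow> nat \<Rightarrow> ('a \<times> real) set set" where
  "SRhomb A r k = {P \<in> SRcells A. r_cell A P \<le> r \<and> k \<le> k_cell A P}"

definition SRhomb_vertices :: "'a::euclidean_space set \<Rightarrow> real \<Rightarrow> nat \<Rightarrow> 'a set set" where
  "SRhomb_vertices A r k = (\<Union>P\<in>SRhomb A r k. cellverts A P)"

end

theory Submission
  imports Defs
begin

definition pw :: "'a::euclidean_space \<Rightarrow> real \<Rightarrow> 'a \<Rightarrow> real" where
  "pw c \<rho> x = (dist x c)^2 - \<rho>^2"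

definition Hs :: "'a::euclidean_space \<Rightarrow> real \<Rightarrow> 'a set \<Rightarrow> real" where
  "Hs c \<rho> w = (\<Sum>x\<in>w. pw c \<rho> x)"

lemma rhomb_mem:
  "w \<in> rhomb A c \<rho> \<longleftrightarrow> A_in A c \<rho> \<subseteq> w \<and> w \<subseteq> A_in A c \<rho> \<union> A_on A c \<rho>"
proof
  assume "w \<in> rhomb A c \<rho>" then show "A_in A c \<rho> \<subseteq> w \<and> w \<subseteq> A_in A c \<rho> \<union> A_on A c \<rho>"
    unfolding rhomb_def by auto
next
  assume h: "A_in A c \<rho> \<subseteq> w \<and> w \<subseteq> A_in A c \<rho> \<union> A_on A c \<rho>"
  then have "w = A_in A c \<rho> \<union> (w \<inter> A_on A c \<rho>)" by auto
  then show "w \<in> rhomb A c \<rho>" unfolding rhomb_def by blast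
qed

lemma rhomb_sub: "w \<in> rhomb A c \<rho> \<Longrightarrow> w \<subseteq> A"
  unfolding rhomb_mem A_in_def A_on_def by auto

lemma Hs_min:
  assumes "finite A" "w \<subseteq> A" "\<rho> > 0"
  shows "Hs c \<rho> (A_in A c \<rho>) \<le> Hs c \<rho> w"
    and "Hs c \<rho> w = Hs c \<rho> (A_in A c \<rho>) \<longleftrightarrow> A_in A c \<rho> \<subseteq> w \<and> w \<subseteq> A_in A c \<rho> \<union> A_on A c \<rho>"
proof -
  let ?I = "A_in A c \<rho>" and ?O = "A_on A c \<rho>"
  have fw: "finite w" using assms finite_subset by blast
  have fI: "finite ?I" using assms unfolding A_in_def by auto
  have neg: "pw c \<rho> x < 0" if "x \<in> ?I" for x
  proof -
    have "dist x c < \<rho>" "0 \<le> dist x c" using that by (auto simp: A_in_def)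
    then have "(dist x c)^2 < \<rho>^2" by (simp add: power_strict_mono)
    then show ?thesis by (simp add: pw_def)
  qed
  have nn: "pw c \<rho> x \<ge> 0" if "x \<in> w - ?I" for x
  proof -
    have "dist x c \<ge> \<rho>" using that assms by (auto simp: A_in_def)
    then have "(dist x c)^2 \<ge> \<rho>^2" using assms by (simp add: power_mono)
    then show ?thesis by (simp add: pw_def)
  qed
  have z: "pw c \<rho> x = 0 \<longleftrightarrow> x \<in> ?O" if "x \<in> w - ?I" for x
  proof -
    have "pw c \<rho> x = 0 \<longleftrightarrow> (dist x c)^2 = \<rho>^2" by (simp add: pw_def)
    also have "\<dots> \<longleftrightarrow> dist x c = \<rho>" using assms
      by (simp add: power2_eq_iff_nonneg)
    finally show ?thesis using that assms by (auto simp: A_on_def)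
  qed
  have s1: "Hs c \<rho> w = (\<Sum>x\<in>w \<inter> ?I. pw c \<rho> x) + (\<Sum>x\<in>w - ?I. pw c \<rho> x)"
    unfolding Hs_def using fw by (metis sum.Int_Diff)
  have s2: "Hs c \<rho> ?I = (\<Sum>x\<in>w \<inter> ?I. pw c \<rho> x) + (\<Sum>x\<in>?I - w. pw c \<rho> x)"
    unfolding Hs_def using fI by (metis Int_commute sum.Int_Diff)
  have a: "(\<Sum>x\<in>w - ?I. pw c \<rho> x) \<ge> 0" by (rule sum_nonneg) (use nn in blast)
  have b: "(\<Sum>x\<in>?I - w. pw c \<rho> x) \<le> 0" by (rule sum_nonpos) (use neg in fastforce)
  show "Hs c \<rho> ?I \<le> Hs c \<rho> w" using s1 s2 a b by linarith
  show "Hs c \<rho> w = Hs c \<rho> ?I \<longleftrightarrow> ?I \<subseteq> w \<and> w \<subseteq> ?I \<union> ?O"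
  proof
    assume e: "Hs c \<rho> w = Hs c \<rho> ?I"
    then have e1: "(\<Sum>x\<in>w - ?I. pw c \<rho> x) = 0" and e2: "(\<Sum>x\<in>?I - w. - pw c \<rho> x) = 0"
      using s1 s2 a b by (simp_all add: sum_negf)
    have "\<forall>x\<in>?I - w. - pw c \<rho> x = 0"
      using e2 sum_nonneg_eq_0_iff[of "?I - w" "\<lambda>x. - pw c \<rho> x"] fI neg
      by (meson DiffD1 finite_Diff less_eq_real_def neg_0_le_iff_le)
    then have "?I - w = {}" using neg by fastforce
    moreover have "\<forall>x\<in>w - ?I. pw c \<rho> x = 0"
      using e1 sum_nonneg_eq_0_iff[of "w - ?I" "\<lambda>x. pw c \<rho> x"] fw nn by blast
    ultimately show "?I \<subseteq> w \<and> w \<subseteq> ?I \<union> ?O" using z by blast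
  next
    assume h: "?I \<subseteq> w \<and> w \<subseteq> ?I \<union> ?O"
    then have "?I - w = {}" by auto
    then have e0: "(\<Sum>x\<in>?I - w. pw c \<rho> x) = 0" by (simp only: sum.empty)
    have "\<forall>x\<in>w - ?I. pw c \<rho> x = 0" using z h by blast
    then have "(\<Sum>x\<in>w - ?I. pw c \<rho> x) = 0" by simp
    then show "Hs c \<rho> w = Hs c \<rho> ?I" using s1 s2 e0 by simp
  qed
qed

lemma rhomb_char:
  assumes "finite A" "\<rho> > 0"
  shows "w \<in> rhomb A c \<rho> \<longleftrightarrow> w \<subseteq> A \<and> (\<forall>w'\<subseteq>A. Hs c \<rho> w \<le> Hs c \<rho> w')"
proof
  assume h: "w \<in> rhomb A c \<rho>"
  then have wA: "w \<subseteq> A" by (rule rhomb_sub)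
  have "A_in A c \<rho> \<subseteq> w \<and> w \<subseteq> A_in A c \<rho> \<union> A_on A c \<rho>" using h by (simp only: rhomb_mem)
  then have e: "Hs c \<rho> w = Hs c \<rho> (A_in A c \<rho>)" using Hs_min(2)[OF assms(1) wA assms(2), where c=c] by blast
  have "Hs c \<rho> w \<le> Hs c \<rho> w'" if "w' \<subseteq> A" for w'
    using e Hs_min(1)[OF assms(1) that assms(2), where c=c] by linarith
  then show "w \<subseteq> A \<and> (\<forall>w'\<subseteq>A. Hs c \<rho> w \<le> Hs c \<rho> w')" using wA by blast
next
  assume h: "w \<subseteq> A \<and> (\<forall>w'\<subseteq>A. Hs c \<rho> w \<le> Hs c \<rho> w')"
  have IA: "A_in A c \<rho> \<subseteq> A" by (auto simp: A_in_def)
  have "Hs c \<rho> w \<le> Hs c \<rho> (A_in A c \<rho>)" using h IA by blast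
  then have "Hs c \<rho> w = Hs c \<rho> (A_in A c \<rho>)" using Hs_min(1)[OF assms(1) _ assms(2), of w, where c=c] h by linarith
  then have "A_in A c \<rho> \<subseteq> w \<and> w \<subseteq> A_in A c \<rho> \<union> A_on A c \<rho>"
    using Hs_min(2)[OF assms(1) _ assms(2), of w, where c=c] h by blast
  then show "w \<in> rhomb A c \<rho>" by (simp only: rhomb_mem)
qed


definition Lvec :: "'a::euclidean_space \<Rightarrow> real \<Rightarrow> 'a \<Rightarrow> real \<Rightarrow> 'a \<times> real" where
  "Lvec c \<rho> c' \<rho>' = (-2 *\<^sub>R (c - c'), -((norm c)^2 - (norm c')^2 - \<rho>^2 + \<rho>'^2))"

lemma pw_diff: "pw c \<rho> x - pw c' \<rho>' x = (-2 *\<^sub>R (c - c')) \<bullet> x + ((norm c)^2 - (norm c')^2 - \<rho>^2 + \<rho>'^2)"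
  unfolding pw_def dist_norm power2_norm_eq_inner
  by (simp add: algebra_simps inner_diff_left inner_diff_right inner_commute)

lemma Hs_diff:
  assumes "finite w"
  shows "Hs c \<rho> w - Hs c' \<rho>' w = Lvec c \<rho> c' \<rho>' \<bullet> emb w"
proof -
  have "Hs c \<rho> w - Hs c' \<rho>' w = (\<Sum>x\<in>w. pw c \<rho> x - pw c' \<rho>' x)"
    unfolding Hs_def by (simp add: sum_subtractf)
  also have "\<dots> = (\<Sum>x\<in>w. (-2 *\<^sub>R (c - c')) \<bullet> x + ((norm c)^2 - (norm c')^2 - \<rho>^2 + \<rho>'^2))"
    by (simp add: pw_diff)
  also have "\<dots> = (\<Sum>x\<in>w. (-2 *\<^sub>R (c - c')) \<bullet> x) + (\<Sum>x\<in>w. ((norm c)^2 - (norm c')^2 - \<rho>^2 + \<rho>'^2))"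
    by (rule sum.distrib)
  also have "\<dots> = (-2 *\<^sub>R (c - c')) \<bullet> (\<Sum>x\<in>w. x) + real (card w) * ((norm c)^2 - (norm c')^2 - \<rho>^2 + \<rho>'^2)"
    by (simp only: inner_sum_right sum_constant)
  also have "\<dots> = Lvec c \<rho> c' \<rho>' \<bullet> emb w"
    unfolding Lvec_def emb_def by (simp add: algebra_simps)
  finally show ?thesis .
qed

lemma hull_G:
  fixes u :: "'b::euclidean_space"
  assumes "\<forall>y\<in>S1. u \<bullet> y = C" "\<forall>y\<in>S2. u \<bullet> y > C" "p \<in> convex hull (S1 \<union> S2)"
  shows "u \<bullet> p \<ge> C \<and> (u \<bullet> p = C \<longrightarrow> p \<in> convex hull S1)"
proof -
  let ?T = "{p. u \<bullet> p \<ge> C \<and> (u \<bullet> p = C \<longrightarrow> p \<in> convex hull S1)}"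
  have "convex ?T"
  proof (rule convexI)
    fix x y and a b :: real
    assume x: "x \<in> ?T" and y: "y \<in> ?T" and ab: "0 \<le> a" "0 \<le> b" "a + b = 1"
    have ux: "u \<bullet> x \<ge> C" and uy: "u \<bullet> y \<ge> C" using x y by auto
    have e: "u \<bullet> (a *\<^sub>R x + b *\<^sub>R y) = a * (u \<bullet> x) + b * (u \<bullet> y)" by (simp add: inner_add_right)
    have ge: "a * (u \<bullet> x) + b * (u \<bullet> y) \<ge> C"
    proof -
      have "a * (u \<bullet> x) \<ge> a * C" "b * (u \<bullet> y) \<ge> b * C" using ux uy ab by (simp_all add: mult_left_mono)
      then show ?thesis using ab by (metis add_mono distrib_right mult_1)
    qed
    have "a * (u \<bullet> x) + b * (u \<bullet> y) = C \<longrightarrow> a *\<^sub>R x + b *\<^sub>R y \<in> convex hull S1"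
    proof
      assume eq: "a * (u \<bullet> x) + b * (u \<bullet> y) = C"
      show "a *\<^sub>R x + b *\<^sub>R y \<in> convex hull S1"
      proof (cases "a = 0")
        case True
        then have "b = 1" using ab by simp
        then show ?thesis using True eq y by simp
      next
        case a0: False
        show ?thesis
        proof (cases "b = 0")
          case True
          then have "a = 1" using ab by simp
          then show ?thesis using True eq x by simp
        next
          case False
          have abC: "a * C + b * C = C" by (metis ab(3) distrib_right mult_1)
          have "a * (u \<bullet> x - C) + b * (u \<bullet> y - C) = 0"
            unfolding right_diff_distrib using eq abC by linarith
          moreover have "a * (u \<bullet> x - C) \<ge> 0" "b * (u \<bullet> y - C) \<ge> 0" using ux uy ab by simp_all
          ultimately have "a * (u \<bullet> x - C) = 0" "b * (u \<bullet> y - C) = 0" by linarith+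
          then have "u \<bullet> x = C" "u \<bullet> y = C" using a0 False by simp_all
          then have "x \<in> convex hull S1" "y \<in> convex hull S1" using x y by auto
          then show ?thesis using ab convex_convex_hull[of S1] by (simp add: convexD)
        qed
      qed
    qed
    then show "a *\<^sub>R x + b *\<^sub>R y \<in> ?T" using e ge by simp
  qed
  moreover have "S1 \<union> S2 \<subseteq> ?T"
  proof
    fix y assume "y \<in> S1 \<union> S2"
    then show "y \<in> ?T"
    proof
      assume y: "y \<in> S1"
      then have "y \<in> convex hull S1" by (rule hull_inc)
      then show "y \<in> ?T" using y assms(1) by simp
    next
      assume y: "y \<in> S2"
      then have "u \<bullet> y > C" using assms(2) by blast
      then show "y \<in> ?T" by simp
    qed
  qed
  ultimately have "convex hull (S1 \<union> S2) \<subseteq> ?T" by (rule hull_minimal[rotated])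
  then show ?thesis using assms(3) by blast
qed

lemma hull_le:
  fixes u :: "'b::euclidean_space"
  assumes "\<forall>y\<in>S. u \<bullet> y \<le> C" "p \<in> convex hull S"
  shows "u \<bullet> p \<le> C"
proof -
  have "convex hull S \<subseteq> {p. u \<bullet> p \<le> C}"
  proof (rule hull_minimal)
    show "S \<subseteq> {p. u \<bullet> p \<le> C}" using assms(1) by blast
    show "convex {p. u \<bullet> p \<le> C}" by (rule convex_halfspace_le)
  qed
  then show ?thesis using assms by blast
qed

lemma rhomb_nonempty: "A_in A c \<rho> \<in> rhomb A c \<rho>"
  unfolding rhomb_mem by (intro conjI subset_refl Un_upper1)

lemma Hs_in:
  assumes "finite A" "\<rho> > 0" "w \<in> rhomb A c \<rho>"
  shows "Hs c \<rho> w = Hs c \<rho> (A_in A c \<rho>)"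
proof -
  have wA: "w \<subseteq> A" using rhomb_sub[OF assms(3)] .
  have X: "A_in A c \<rho> \<subseteq> w \<and> w \<subseteq> A_in A c \<rho> \<union> A_on A c \<rho>" using assms(3) by (simp only: rhomb_mem)
  show ?thesis using iffD2[OF Hs_min(2)[OF assms(1) wA assms(2), where c=c] X] .
qed

lemma finite_rhomb_elem: "finite A \<Longrightarrow> w \<in> rhomb A c \<rho> \<Longrightarrow> finite w"
  by (drule rhomb_sub) (rule finite_subset)

lemma lemK:
  assumes A: "finite A" and p: "\<rho> > 0" "\<rho>' > 0"
    and v: "v \<in> rhomb A c \<rho>" and h: "emb v \<in> ghull (rhomb A c' \<rho>')"
  shows "v \<in> rhomb A c' \<rho>'"
proof -
  let ?R' = "rhomb A c' \<rho>'"
  let ?m' = "Hs c' \<rho>' (A_in A c' \<rho>')"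
  let ?u = "Lvec c' \<rho>' c \<rho>"
  have vA: "v \<subseteq> A" using rhomb_sub[OF v] .
  have vmin: "\<forall>w'\<subseteq>A. Hs c \<rho> v \<le> Hs c \<rho> w'" using v rhomb_char[OF A p(1)] by blast
  have m'min: "\<forall>w'\<subseteq>A. ?m' \<le> Hs c' \<rho>' w'"
    using rhomb_nonempty[of A c' \<rho>'] rhomb_char[OF A p(2)] by blast
  have "\<forall>y\<in>emb ` ?R'. ?u \<bullet> y \<le> ?m' - Hs c \<rho> v"
  proof
    fix y assume "y \<in> emb ` ?R'"
    then obtain w where w: "w \<in> ?R'" "y = emb w" by blast
    have wA: "w \<subseteq> A" using rhomb_sub[OF w(1)] .
    have fw: "finite w" using finite_rhomb_elem[OF A w(1)] .
    have "Hs c' \<rho>' w = ?m'" using Hs_in[OF A p(2) w(1)] .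
    moreover have "Hs c \<rho> v \<le> Hs c \<rho> w" using vmin wA by blast
    ultimately show "?u \<bullet> y \<le> ?m' - Hs c \<rho> v" using Hs_diff[OF fw, of c' \<rho>' c \<rho>] w by simp
  qed
  then have "?u \<bullet> emb v \<le> ?m' - Hs c \<rho> v" using hull_le h unfolding ghull_def by blast
  moreover have "finite v" using vA A finite_subset by blast
  ultimately have vm: "Hs c' \<rho>' v \<le> ?m'" using Hs_diff[of v c' \<rho>' c \<rho>] by simp
  have "Hs c' \<rho>' v \<le> Hs c' \<rho>' w'" if "w' \<subseteq> A" for w'
  proof -
    have "?m' \<le> Hs c' \<rho>' w'" using m'min that by blast
    then show ?thesis using vm by linarith
  qed
  then have "\<forall>w'\<subseteq>A. Hs c' \<rho>' v \<le> Hs c' \<rho>' w'" by blast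
  then show ?thesis using rhomb_char[OF A p(2)] vA by blast
qed

lemma lem_inter:
  assumes A: "finite A" and p: "\<rho> > 0" "\<rho>' > 0"
    and h1: "x \<in> ghull (rhomb A c \<rho>)" and h2: "x \<in> ghull (rhomb A c' \<rho>')"
  shows "x \<in> ghull (rhomb A c \<rho> \<inter> rhomb A c' \<rho>')"
proof -
  let ?R = "rhomb A c \<rho>" and ?R' = "rhomb A c' \<rho>'"
  let ?m = "Hs c \<rho> (A_in A c \<rho>)" and ?m' = "Hs c' \<rho>' (A_in A c' \<rho>')"
  let ?u = "Lvec c' \<rho>' c \<rho>"
  have mmin: "\<forall>w'\<subseteq>A. ?m \<le> Hs c \<rho> w'"
    using rhomb_nonempty[of A c \<rho>] rhomb_char[OF A p(1)] by blast
  have m'min: "\<forall>w'\<subseteq>A. ?m' \<le> Hs c' \<rho>' w'"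
    using rhomb_nonempty[of A c' \<rho>'] rhomb_char[OF A p(2)] by blast
  have inR: "Hs c \<rho> w = ?m" if "w \<in> ?R" for w
    using Hs_in[OF A p(1) that] .
  have inR': "Hs c' \<rho>' w = ?m'" if "w \<in> ?R'" for w
    using Hs_in[OF A p(2) that] .
  have "\<forall>y\<in>emb ` ?R'. ?u \<bullet> y \<le> ?m' - ?m"
  proof
    fix y assume "y \<in> emb ` ?R'"
    then obtain w where w: "w \<in> ?R'" "y = emb w" by blast
    have fw: "finite w" using finite_rhomb_elem[OF A w(1)] .
    have "?m \<le> Hs c \<rho> w" using mmin rhomb_sub[OF w(1)] by blast
    then show "?u \<bullet> y \<le> ?m' - ?m" using Hs_diff[OF fw, of c' \<rho>' c \<rho>] w inR' by simp
  qed
  then have le: "?u \<bullet> x \<le> ?m' - ?m" using hull_le h2 unfolding ghull_def by blast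
  have S1: "\<forall>y\<in>emb ` (?R \<inter> ?R'). ?u \<bullet> y = ?m' - ?m"
  proof
    fix y assume "y \<in> emb ` (?R \<inter> ?R')"
    then obtain w where w: "w \<in> ?R" "w \<in> ?R'" "y = emb w" by blast
    have fw: "finite w" using finite_rhomb_elem[OF A w(1)] .
    show "?u \<bullet> y = ?m' - ?m" using Hs_diff[OF fw, of c' \<rho>' c \<rho>] w inR inR' by simp
  qed
  have S2: "\<forall>y\<in>emb ` (?R - ?R'). ?u \<bullet> y > ?m' - ?m"
  proof
    fix y assume "y \<in> emb ` (?R - ?R')"
    then obtain w where w: "w \<in> ?R" "w \<notin> ?R'" "y = emb w" by blast
    have fw: "finite w" using finite_rhomb_elem[OF A w(1)] .
    have wA: "w \<subseteq> A" using rhomb_sub[OF w(1)] .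
    have "\<not> (\<forall>w'\<subseteq>A. Hs c' \<rho>' w \<le> Hs c' \<rho>' w')" using w(2) rhomb_char[OF A p(2)] wA by blast
    then obtain w' where w': "w' \<subseteq> A" "\<not> Hs c' \<rho>' w \<le> Hs c' \<rho>' w'" by blast
    have "?m' \<le> Hs c' \<rho>' w'" using m'min w'(1) by blast
    then have "Hs c' \<rho>' w > ?m'" using w'(2) by linarith
    then show "?u \<bullet> y > ?m' - ?m" using Hs_diff[OF fw, of c' \<rho>' c \<rho>] w inR by simp
  qed
  have "emb ` ?R = emb ` (?R \<inter> ?R') \<union> emb ` (?R - ?R')" by blast
  then have "x \<in> convex hull (emb ` (?R \<inter> ?R') \<union> emb ` (?R - ?R'))" using h1 unfolding ghull_def by simp
  from hull_G[OF S1 S2 this] le show ?thesis unfolding ghull_def by simp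
qed


lemma pw_comb:
  assumes "Q \<ge> 0" "Q = (1-t)*\<rho>^2 + t*\<rho>'^2 - t*(1-t)*(dist c c')^2"
  shows "pw ((1-t) *\<^sub>R c + t *\<^sub>R c') (sqrt Q) x = (1-t) * pw c \<rho> x + t * pw c' \<rho>' x"
proof -
  have sq: "(sqrt Q)^2 = Q" using assms(1) by simp
  show ?thesis unfolding pw_def sq unfolding assms(2) dist_norm power2_norm_eq_inner
    by (simp add: algebra_simps inner_diff_left inner_diff_right inner_add_left inner_add_right inner_commute power2_eq_square)
qed

lemma Hs_comb:
  assumes "Q \<ge> 0" "Q = (1-t)*\<rho>^2 + t*\<rho>'^2 - t*(1-t)*(dist c c')^2"
  shows "Hs ((1-t) *\<^sub>R c + t *\<^sub>R c') (sqrt Q) w = (1-t) * Hs c \<rho> w + t * Hs c' \<rho>' w"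
  unfolding Hs_def pw_comb[OF assms] by (simp add: sum.distrib sum_distrib_left)

lemma comb:
  assumes A: "finite A" and p: "\<rho> > 0" "\<rho>' > 0"
    and ne: "rhomb A c \<rho> \<inter> rhomb A c' \<rho>' \<noteq> {}"
    and t: "0 < t" "t < 1" and Q: "Q > 0" "Q = (1-t)*\<rho>^2 + t*\<rho>'^2 - t*(1-t)*(dist c c')^2"
  shows "rhomb A ((1-t) *\<^sub>R c + t *\<^sub>R c') (sqrt Q) = rhomb A c \<rho> \<inter> rhomb A c' \<rho>'"
proof -
  let ?x = "(1-t) *\<^sub>R c + t *\<^sub>R c'"
  have sQ: "sqrt Q > 0" using Q by simp
  have HC: "Hs ?x (sqrt Q) w = (1-t) * Hs c \<rho> w + t * Hs c' \<rho>' w" for w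
    using Hs_comb[OF _ Q(2)] Q(1) by simp
  obtain w0 where w0: "w0 \<in> rhomb A c \<rho>" "w0 \<in> rhomb A c' \<rho>'" using ne by blast
  have m0: "\<forall>w'\<subseteq>A. Hs c \<rho> w0 \<le> Hs c \<rho> w'" using w0(1) rhomb_char[OF A p(1)] by blast
  have m0': "\<forall>w'\<subseteq>A. Hs c' \<rho>' w0 \<le> Hs c' \<rho>' w'" using w0(2) rhomb_char[OF A p(2)] by blast
  show ?thesis
  proof (intro set_eqI iffI)
    fix w assume w: "w \<in> rhomb A ?x (sqrt Q)"
    have wA: "w \<subseteq> A" using rhomb_sub[OF w] .
    have wm: "\<forall>w'\<subseteq>A. Hs ?x (sqrt Q) w \<le> Hs ?x (sqrt Q) w'" using w rhomb_char[OF A sQ] by blast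
    have w0A: "w0 \<subseteq> A" using rhomb_sub[OF w0(1)] .
    have "Hs ?x (sqrt Q) w \<le> Hs ?x (sqrt Q) w0" using wm w0A by blast
    then have le: "(1-t) * (Hs c \<rho> w - Hs c \<rho> w0) + t * (Hs c' \<rho>' w - Hs c' \<rho>' w0) \<le> 0"
      unfolding HC by (simp add: algebra_simps)
    have a: "Hs c \<rho> w - Hs c \<rho> w0 \<ge> 0" using m0 wA by simp
    have b: "Hs c' \<rho>' w - Hs c' \<rho>' w0 \<ge> 0" using m0' wA by simp
    have a': "(1-t) * (Hs c \<rho> w - Hs c \<rho> w0) \<ge> 0" using a t by simp
    have b': "t * (Hs c' \<rho>' w - Hs c' \<rho>' w0) \<ge> 0" using b t by simp
    have "(1-t) * (Hs c \<rho> w - Hs c \<rho> w0) = 0" "t * (Hs c' \<rho>' w - Hs c' \<rho>' w0) = 0"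
      using le a' b' by linarith+
    then have e1: "Hs c \<rho> w = Hs c \<rho> w0" and e2: "Hs c' \<rho>' w = Hs c' \<rho>' w0" using t by simp_all
    have "\<forall>w'\<subseteq>A. Hs c \<rho> w \<le> Hs c \<rho> w'" using m0 e1 by simp
    then have "w \<in> rhomb A c \<rho>" using rhomb_char[OF A p(1)] wA by blast
    moreover have "\<forall>w'\<subseteq>A. Hs c' \<rho>' w \<le> Hs c' \<rho>' w'" using m0' e2 by simp
    then have "w \<in> rhomb A c' \<rho>'" using rhomb_char[OF A p(2)] wA by blast
    ultimately show "w \<in> rhomb A c \<rho> \<inter> rhomb A c' \<rho>'" by blast
  next
    fix w assume w: "w \<in> rhomb A c \<rho> \<inter> rhomb A c' \<rho>'"
    have wA: "w \<subseteq> A" using w by (intro rhomb_sub[of w A c \<rho>]) blast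
    have m1: "\<forall>w'\<subseteq>A. Hs c \<rho> w \<le> Hs c \<rho> w'" using w rhomb_char[OF A p(1)] by blast
    have m2: "\<forall>w'\<subseteq>A. Hs c' \<rho>' w \<le> Hs c' \<rho>' w'" using w rhomb_char[OF A p(2)] by blast
    have "Hs ?x (sqrt Q) w \<le> Hs ?x (sqrt Q) w'" if "w' \<subseteq> A" for w'
    proof -
      have "(1-t) * Hs c \<rho> w \<le> (1-t) * Hs c \<rho> w'" using m1 that t by (simp add: mult_left_mono)
      moreover have "t * Hs c' \<rho>' w \<le> t * Hs c' \<rho>' w'" using m2 that t by (simp add: mult_left_mono)
      ultimately show ?thesis unfolding HC by linarith
    qed
    then show "w \<in> rhomb A ?x (sqrt Q)" using rhomb_char[OF A sQ] wA by blast
  qed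
qed

lemma finite_Rhombs: "finite A \<Longrightarrow> finite (Rhombs A)"
proof -
  assume A: "finite A"
  have "Rhombs A \<subseteq> Pow (Pow A)"
  proof
    fix R assume "R \<in> Rhombs A"
    then obtain c \<rho> where "R = rhomb A c \<rho>" unfolding Rhombs_def by blast
    then show "R \<in> Pow (Pow A)" using rhomb_sub[of _ A c \<rho>] by auto
  qed
  then show ?thesis using A by (meson finite_Pow_iff finite_subset)
qed

lemma Rhombs_E:
  assumes "R \<in> Rhombs A"
  obtains c \<rho> where "\<rho> > 0" "R = rhomb A c \<rho>"
  using assms unfolding Rhombs_def by blast

lemma Mrad:
  assumes A: "finite A" and R': "R' \<in> Rhombs A" and sub: "R' \<subseteq> rhomb A c \<rho>" and p: "\<rho> > 0"
  shows "r_rhomb A R' \<le> \<rho>"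
proof -
  obtain c' \<rho>' where p': "\<rho>' > 0" and R'eq: "R' = rhomb A c' \<rho>'" using Rhombs_E[OF R'] by blast
  let ?S = "{\<rho>. \<rho> > 0 \<and> (\<exists>c. rhomb A c \<rho> = R')}"
  let ?d = "(dist c c')^2"
  have bdd: "bdd_below ?S" by (rule bdd_belowI[of _ 0]) auto
  have inter: "rhomb A c \<rho> \<inter> rhomb A c' \<rho>' = R'" using sub unfolding R'eq by (rule Int_absorb1)
  have ne: "rhomb A c \<rho> \<inter> rhomb A c' \<rho>' \<noteq> {}" unfolding inter R'eq using rhomb_nonempty[of A c' \<rho>'] by blast
  have Sne: "\<rho>' \<in> ?S" using p' R'eq by blast
  have I0: "0 \<le> Inf ?S" by (rule cInf_greatest) (use Sne in auto)
  have key: "(Inf ?S)^2 \<le> \<rho>^2 + e" if e: "e > 0" for e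
  proof -
    define t where "t = min (1/2) (min (\<rho>^2 / (2 * (?d + 1))) (e / (\<rho>'^2 + 1)))"
    have dge: "?d \<ge> 0" by simp
    then have h1: "2 * (?d + 1) > 0" by (smt (verit))
    have "\<rho>'^2 \<ge> 0" by simp
    then have h2: "\<rho>'^2 + 1 > 0" by linarith
    have h3: "\<rho>^2 / (2 * (?d + 1)) > 0" by (rule divide_pos_pos) (use p h1 in auto)
    have h4: "e / (\<rho>'^2 + 1) > 0" by (rule divide_pos_pos) (use e h2 in auto)
    have t0: "t > 0" unfolding t_def using h3 h4 by simp
    have t1: "t < 1" unfolding t_def by simp
    have td: "t * ?d < \<rho>^2"
    proof -
      have "t \<le> \<rho>^2 / (2 * (?d + 1))" unfolding t_def by simp
      then have "t * ?d \<le> \<rho>^2 / (2 * (?d + 1)) * ?d" by (rule mult_right_mono) simp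
      also have "\<dots> < \<rho>^2"
      proof -
        have "\<rho>^2 / (2 * (?d + 1)) * ?d = \<rho>^2 * (?d / (2 * (?d + 1)))" by simp
        also have "\<dots> < \<rho>^2 * 1"
        proof (rule mult_strict_left_mono)
          have "?d < 2 * (?d + 1)" using dge by (smt (verit))
          then show "?d / (2 * (?d + 1)) < 1" using divide_less_eq_1_pos[OF h1] by blast
          show "0 < \<rho>^2" using p by simp
        qed
        finally show ?thesis by simp
      qed
      finally show ?thesis .
    qed
    have te: "t * \<rho>'^2 \<le> e"
    proof -
      have "t \<le> e / (\<rho>'^2 + 1)" unfolding t_def by simp
      then have "t * \<rho>'^2 \<le> e / (\<rho>'^2 + 1) * \<rho>'^2" by (rule mult_right_mono) simp
      also have "\<dots> \<le> e"
      proof -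
        have "e / (\<rho>'^2 + 1) * \<rho>'^2 = e * (\<rho>'^2 / (\<rho>'^2 + 1))" by simp
        also have "\<dots> \<le> e * 1"
        proof (rule mult_left_mono)
          show "\<rho>'^2 / (\<rho>'^2 + 1) \<le> 1" using h2 by (simp add: divide_le_eq_1_pos)
        qed (use e in simp)
        finally show ?thesis by simp
      qed
      finally show ?thesis .
    qed
    define Q where "Q = (1-t)*\<rho>^2 + t*\<rho>'^2 - t*(1-t)*?d"
    have Qpos: "Q > 0"
    proof -
      have "Q = (1-t) * (\<rho>^2 - t * ?d) + t*\<rho>'^2" unfolding Q_def by (simp add: algebra_simps)
      moreover have "(1-t) * (\<rho>^2 - t * ?d) > 0" using t1 td by simp
      moreover have "t*\<rho>'^2 \<ge> 0" using t0 by simp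
      ultimately show ?thesis by linarith
    qed
    have Qle: "Q \<le> \<rho>^2 + e"
    proof -
      have "t*(1-t)*?d \<ge> 0" using t0 t1 by simp
      moreover have "(1-t)*\<rho>^2 \<le> \<rho>^2" using t0 by (simp add: algebra_simps)
      ultimately show ?thesis unfolding Q_def using te by linarith
    qed
    have "rhomb A ((1-t) *\<^sub>R c + t *\<^sub>R c') (sqrt Q) = R'"
      using comb[OF A p p' ne t0 t1 Qpos Q_def] inter by simp
    then have "sqrt Q \<in> ?S" using Qpos by auto
    then have "Inf ?S \<le> sqrt Q" by (rule cInf_lower[OF _ bdd])
    then have "(Inf ?S)^2 \<le> (sqrt Q)^2" using I0 by (simp add: power_mono)
    then show ?thesis using Qpos Qle by simp
  qed
  have "(Inf ?S)^2 \<le> \<rho>^2" by (rule field_le_epsilon, rule key)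
  then have "Inf ?S \<le> \<rho>" by (rule power2_le_imp_le) (use p in simp)
  then show ?thesis unfolding r_rhomb_def .
qed


lemma interp:
  fixes Ob :: "'a::euclidean_space set" and f :: "'a \<Rightarrow> real"
  assumes fin: "finite Ob" and ind: "\<not> affine_dependent Ob"
  shows "\<exists>u \<beta>. \<forall>z\<in>Ob. u \<bullet> z + \<beta> = f z"
proof (cases "Ob = {}")
  case True
  then show ?thesis by blast
next
  case False
  then obtain o0 where o0: "o0 \<in> Ob" by blast
  let ?T = "(\<lambda>x. -o0 + x) ` (Ob - {o0})"
  have ins: "insert o0 (Ob - {o0}) = Ob" using o0 by blast
  have "\<not> dependent ?T"
    using ind affine_dependent_iff_dependent[of o0 "Ob - {o0}"] ins by simp
  then obtain g where lin: "linear g" and gT: "\<forall>y\<in>?T. g y = f (y + o0) - f o0"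
    using linear_independent_extend[of ?T "\<lambda>y. f (y + o0) - f o0"] by blast
  define u where "u = (\<Sum>i\<in>Basis. g i *\<^sub>R i)"
  have gu: "g x = u \<bullet> x" for x
  proof -
    have "g x = (g x) \<bullet> (1::real)" by simp
    also have "\<dots> = (\<Sum>i\<in>Basis. (x \<bullet> i) * (g i \<bullet> (1::real)))" by (rule Linear_Algebra.linear_componentwise[OF lin])
    also have "\<dots> = (\<Sum>i\<in>Basis. g i * (i \<bullet> x))" by (simp add: inner_commute mult.commute)
    also have "\<dots> = u \<bullet> x" unfolding u_def by (simp add: inner_sum_left)
    finally show ?thesis .
  qed
  define \<beta> where "\<beta> = f o0 - u \<bullet> o0"
  have "u \<bullet> z + \<beta> = f z" if z: "z \<in> Ob" for z
  proof (cases "z = o0")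
    case True
    then show ?thesis unfolding \<beta>_def by simp
  next
    case False
    then have "-o0 + z \<in> ?T" using z by blast
    then have "g (-o0 + z) = f (-o0 + z + o0) - f o0" using gT by blast
    then have "u \<bullet> (-o0 + z) = f z - f o0" unfolding gu by simp
    then have "u \<bullet> z - u \<bullet> o0 = f z - f o0" by (simp add: inner_add_right inner_diff_right)
    then show ?thesis unfolding \<beta>_def by linarith
  qed
  then show ?thesis by blast
qed

lemma A_on_indep:
  assumes gp: "gen_pos A" and p: "\<rho> > 0"
  shows "finite (A_on A c \<rho>)" "\<not> affine_dependent (A_on A c \<rho>)"
proof -
  have A: "finite A" using gp unfolding gen_pos_def by blast
  let ?O = "A_on A c \<rho>"
  have OA: "?O \<subseteq> A" unfolding A_on_def by blast
  show fO: "finite ?O" using A OA finite_subset by blast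
  have "card ?O \<le> DIM('a) + 1"
  proof (rule ccontr)
    assume "\<not> card ?O \<le> DIM('a) + 1"
    then have "DIM('a) + 2 \<le> card ?O" by simp
    then obtain B where B: "B \<subseteq> ?O" "card B = DIM('a) + 2" by (rule obtain_subset_with_card_n)
    have "B \<subseteq> A" using B OA by blast
    moreover have "B \<subseteq> sphere c \<rho>" using B(1) unfolding A_on_def by (auto simp: dist_commute)
    ultimately show False using gp B(2) p unfolding gen_pos_def by blast
  qed
  then show "\<not> affine_dependent ?O" using gp OA unfolding gen_pos_def by blast
qed

lemma sum_split_diff:
  fixes h :: "'a \<Rightarrow> real"
  assumes "finite w" "finite v"
  shows "(\<Sum>x\<in>w. h x) - (\<Sum>x\<in>v. h x) = (\<Sum>x\<in>w - v. h x) - (\<Sum>x\<in>v - w. h x)"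
proof -
  have "(\<Sum>x\<in>w. h x) = (\<Sum>x\<in>w \<inter> v. h x) + (\<Sum>x\<in>w - v. h x)" using assms(1) by (metis sum.Int_Diff)
  moreover have "(\<Sum>x\<in>v. h x) = (\<Sum>x\<in>w \<inter> v. h x) + (\<Sum>x\<in>v - w. h x)"
    using assms(2) by (metis Int_commute sum.Int_Diff)
  ultimately show ?thesis by linarith
qed

lemma lemE:
  assumes gp: "gen_pos A" and p: "\<rho> > 0" and v: "v \<in> rhomb A c \<rho>"
    and P: "P \<subseteq> ghull (rhomb A c \<rho>)" and ev: "emb v \<in> P"
  shows "emb v extreme_point_of P"
proof -
  have A: "finite A" using gp unfolding gen_pos_def by blast
  let ?R = "rhomb A c \<rho>" and ?O = "A_on A c \<rho>" and ?I = "A_in A c \<rho>"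
  let ?f = "\<lambda>z. if z \<in> v then -1 else (1::real)"
  obtain u \<beta> where ub: "\<forall>z\<in>?O. u \<bullet> z + \<beta> = ?f z"
    using interp[OF A_on_indep[where c=c, OF gp p], of ?f] by blast
  define U where "U = (u, -\<beta>)"
  have Uemb: "U \<bullet> emb w = (\<Sum>x\<in>w. u \<bullet> x + \<beta>)" if "finite w" for w
    unfolding U_def emb_def by (simp add: sum.distrib inner_sum_right)
  have fv: "finite v" using finite_rhomb_elem[OF A v] .
  have vI: "?I \<subseteq> v" "v \<subseteq> ?I \<union> ?O" using v rhomb_mem by blast+
  have strict: "U \<bullet> emb w > U \<bullet> emb v" if w: "w \<in> ?R" "w \<noteq> v" for w
  proof -
    have fw: "finite w" using finite_rhomb_elem[OF A w(1)] .
    have wI: "?I \<subseteq> w" "w \<subseteq> ?I \<union> ?O" using w(1) rhomb_mem by blast+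
    have d1: "(\<Sum>x\<in>w - v. u \<bullet> x + \<beta>) = real (card (w - v))"
    proof -
      have "(\<Sum>x\<in>w - v. u \<bullet> x + \<beta>) = (\<Sum>x\<in>w - v. 1)"
      proof (rule sum.cong)
        fix x assume "x \<in> w - v"
        then have "x \<in> ?O" "x \<notin> v" using wI vI by blast+
        then show "u \<bullet> x + \<beta> = 1" using ub by simp
      qed simp
      then show ?thesis by simp
    qed
    have d2: "(\<Sum>x\<in>v - w. u \<bullet> x + \<beta>) = - real (card (v - w))"
    proof -
      have "(\<Sum>x\<in>v - w. u \<bullet> x + \<beta>) = (\<Sum>x\<in>v - w. -1)"
      proof (rule sum.cong)
        fix x assume "x \<in> v - w"
        then have "x \<in> ?O" "x \<in> v" using wI vI by blast+
        then show "u \<bullet> x + \<beta> = -1" using ub by simp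
      qed simp
      then show ?thesis by simp
    qed
    have "w - v \<noteq> {} \<or> v - w \<noteq> {}" using w(2) by blast
    then have "card (w - v) > 0 \<or> card (v - w) > 0" using fw fv by auto
    then have "(\<Sum>x\<in>w. u \<bullet> x + \<beta>) - (\<Sum>x\<in>v. u \<bullet> x + \<beta>) > 0"
      unfolding sum_split_diff[OF fw fv] d1 d2 by auto
    then show ?thesis using Uemb fw fv by simp
  qed
  let ?C = "U \<bullet> emb v"
  have S1: "\<forall>y\<in>{emb v}. U \<bullet> y = ?C" by simp
  have S2: "\<forall>y\<in>emb ` (?R - {v}). U \<bullet> y > ?C" using strict by blast
  have RU: "emb ` ?R = {emb v} \<union> emb ` (?R - {v})" using v by blast
  have HG: "U \<bullet> a \<ge> ?C \<and> (U \<bullet> a = ?C \<longrightarrow> a = emb v)" if "a \<in> P" for a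
  proof -
    have "a \<in> convex hull ({emb v} \<union> emb ` (?R - {v}))" using that P RU unfolding ghull_def by auto
    from hull_G[OF S1 S2 this] show ?thesis by simp
  qed
  show ?thesis
    unfolding extreme_point_of_def
  proof (intro conjI ev ballI notI)
    fix a b assume a: "a \<in> P" and b: "b \<in> P" and s: "emb v \<in> open_segment a b"
    then obtain \<theta> where ab: "a \<noteq> b" and th: "0 < \<theta>" "\<theta> < 1" and ee: "emb v = (1 - \<theta>) *\<^sub>R a + \<theta> *\<^sub>R b"
      unfolding in_segment by blast
    have ha: "U \<bullet> a \<ge> ?C" and hb: "U \<bullet> b \<ge> ?C" using HG a b by blast+
    have "?C = (1 - \<theta>) * (U \<bullet> a) + \<theta> * (U \<bullet> b)" using ee by (simp add: inner_add_right)
    then have "(1 - \<theta>) * (U \<bullet> a - ?C) + \<theta> * (U \<bullet> b - ?C) = 0" by (simp add: algebra_simps)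
    moreover have "(1 - \<theta>) * (U \<bullet> a - ?C) \<ge> 0" "\<theta> * (U \<bullet> b - ?C) \<ge> 0" using ha hb th by simp_all
    ultimately have "(1 - \<theta>) * (U \<bullet> a - ?C) = 0" "\<theta> * (U \<bullet> b - ?C) = 0" by linarith+
    then have "U \<bullet> a = ?C" "U \<bullet> b = ?C" using th by simp_all
    then have "a = emb v" "b = emb v" using HG a b by blast+
    then show False using ab by simp
  qed
qed


lemma rhomb_Vor:
  assumes "B \<in> rhomb A c \<rho>"
  shows "c \<in> Vor A B" "\<forall>a\<in>B. dist c a \<le> \<rho>"
proof -
  have h: "A_in A c \<rho> \<subseteq> B" "B \<subseteq> A_in A c \<rho> \<union> A_on A c \<rho>" using assms rhomb_mem by blast+
  have le: "dist c a \<le> \<rho>" if "a \<in> B" for a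
    using h(2) that unfolding A_in_def A_on_def by (auto simp: dist_commute)
  have ge: "dist c a' \<ge> \<rho>" if "a' \<in> A - B" for a'
  proof (rule ccontr)
    assume "\<not> dist c a' \<ge> \<rho>"
    then have "a' \<in> A_in A c \<rho>" using that unfolding A_in_def by (auto simp: dist_commute)
    then show False using h(1) that by blast
  qed
  show "c \<in> Vor A B" unfolding Vor_def
  proof (intro CollectI ballI)
    fix a a' assume "a \<in> B" "a' \<in> A - B"
    then show "dist c a \<le> dist c a'" using le ge by (meson order_trans)
  qed
  show "\<forall>a\<in>B. dist c a \<le> \<rho>" using le by blast
qed

lemma closed_Vor: "closed (Vor A B)"
proof -
  have "Vor A B = (\<Inter>a\<in>B. \<Inter>a'\<in>A - B. {b. dist b a \<le> dist b a'})" unfolding Vor_def by auto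
  moreover have "closed {b. dist b a \<le> dist b a'}" for a a' :: 'a
    by (intro closed_Collect_le continuous_intros)
  ultimately show ?thesis by (simp add: closed_INT)
qed

lemma common_point:
  assumes A: "finite A" and R': "R' \<in> Rhombs A" and rr: "r_rhomb A R' \<le> r"
    and ne: "B0 \<in> R'" "a0 \<in> B0"
  shows "\<exists>x. \<forall>B\<in>R'. x \<in> BV A r B"
proof -
  obtain c' \<rho>' where p': "\<rho>' > 0" and R'eq: "R' = rhomb A c' \<rho>'" using Rhombs_E[OF R'] by blast
  let ?S = "{\<rho>. \<rho> > 0 \<and> (\<exists>c. rhomb A c \<rho> = R')}"
  have Sne: "?S \<noteq> {}" using p' R'eq by blast
  let ?U = "\<Union>R'"
  define T where "T n = (\<Inter>B\<in>R'. Vor A B) \<inter> (\<Inter>a\<in>?U. cball a (r + inverse (real (Suc n))))" for n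
  have Tne: "T n \<noteq> {}" for n
  proof -
    have "Inf ?S < r + inverse (real (Suc n))" using rr unfolding r_rhomb_def
      by (smt (verit) inverse_positive_iff_positive of_nat_0_less_iff zero_less_Suc)
    then obtain \<rho>1 where "\<rho>1 \<in> ?S" "\<rho>1 < r + inverse (real (Suc n))" using cInf_lessD[OF Sne] by blast
    then obtain c1 where c1: "rhomb A c1 \<rho>1 = R'" "\<rho>1 < r + inverse (real (Suc n))" by blast
    have "c1 \<in> T n" unfolding T_def
    proof (rule IntI)
      show "c1 \<in> (\<Inter>B\<in>R'. Vor A B)"
      proof (rule INT_I)
        fix B assume "B \<in> R'"
        then have "B \<in> rhomb A c1 \<rho>1" using c1(1) by simp
        then show "c1 \<in> Vor A B" by (rule rhomb_Vor(1))
      qed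
      show "c1 \<in> (\<Inter>a\<in>?U. cball a (r + inverse (real (Suc n))))"
      proof (rule INT_I)
        fix a assume "a \<in> ?U"
        then obtain B where B: "B \<in> R'" "a \<in> B" by blast
        then have "B \<in> rhomb A c1 \<rho>1" using c1(1) by simp
        then have "dist c1 a \<le> \<rho>1" using rhomb_Vor(2)[of B A c1 \<rho>1] B(2) by blast
        then show "c1 \<in> cball a (r + inverse (real (Suc n)))" using c1(2) by (simp add: dist_commute)
      qed
    qed
    then show ?thesis by blast
  qed
  have Tcl: "closed (T n)" for n
    unfolding T_def by (intro closed_Int closed_INT closed_Vor closed_cball ballI)
  have Tdec: "T m \<subseteq> T n" if "n \<le> m" for n m
  proof -
    have "inverse (real (Suc m)) \<le> inverse (real (Suc n))" using that by (simp add: le_imp_inverse_le)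
    then have cb: "cball a (r + inverse (real (Suc m))) \<subseteq> cball a (r + inverse (real (Suc n)))" for a :: 'a
      by (simp add: subset_cball)
    show ?thesis unfolding T_def by (rule Int_mono[OF subset_refl INF_mono']) (rule cb)
  qed
  have a0U: "a0 \<in> ?U" using ne by blast
  have "T 0 \<subseteq> cball a0 (r + 1)"
  proof
    fix x assume "x \<in> T 0"
    then have "x \<in> cball a0 (r + inverse (real (Suc 0)))" unfolding T_def using a0U by blast
    then show "x \<in> cball a0 (r + 1)" by simp
  qed
  then have cT: "compact (T 0)" using Tcl[of 0] by (meson bounded_cball bounded_subset compact_eq_bounded_closed)
  have "T 0 \<inter> \<Inter>(range T) \<noteq> {}"
  proof (rule compact_imp_fip[OF cT])
    show "closed X" if "X \<in> range T" for X
    proof -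
      obtain n where "X = T n" using \<open>X \<in> range T\<close> by blast
      then show ?thesis using Tcl by simp
    qed
    fix F' assume F': "finite F'" "F' \<subseteq> range T"
    obtain N where N: "finite N" "F' = T ` N" using finite_subset_image[OF F'(1) F'(2)] by blast
    show "T 0 \<inter> \<Inter>F' \<noteq> {}"
    proof (cases "N = {}")
      case True
      then show ?thesis using N Tne[of 0] by simp
    next
      case False
      let ?m = "Max N"
      have "T ?m \<subseteq> T 0 \<inter> \<Inter>F'"
      proof -
        have "T ?m \<subseteq> T 0" using Tdec by simp
        moreover have "T ?m \<subseteq> T n" if "n \<in> N" for n using Tdec Max_ge[OF N(1) that] by blast
        ultimately show ?thesis using N(2) by blast
      qed
      then show ?thesis using Tne[of ?m] by blast
    qed
  qed
  then obtain x where x: "\<forall>n. x \<in> T n" by blast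
  have xV: "\<forall>B\<in>R'. x \<in> Vor A B" using x[rule_format, of 0] unfolding T_def by blast
  have xd: "dist x a \<le> r" if "a \<in> ?U" for a
  proof (rule field_le_epsilon)
    fix e :: real assume e: "e > 0"
    obtain n where n: "inverse (real (Suc n)) < e" using reals_Archimedean[OF e] by blast
    have "x \<in> cball a (r + inverse (real (Suc n)))" using x[rule_format, of n] that unfolding T_def by blast
    then show "dist x a \<le> r + e" using n by (simp add: dist_commute)
  qed
  have "x \<in> BV A r B" if "B \<in> R'" for B
    unfolding BV_def BallR_def using xV that xd by blast
  then show ?thesis by blast
qed

lemma min_rhomb_props:
  assumes A: "finite A" and R: "R \<in> Rhombs A" and P: "P \<subseteq> ghull R"
  shows "min_rhomb A P \<in> Rhombs A" "P \<subseteq> ghull (min_rhomb A P)"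
    "\<And>R''. R'' \<in> Rhombs A \<Longrightarrow> P \<subseteq> ghull R'' \<Longrightarrow> aff_dim (ghull (min_rhomb A P)) \<le> aff_dim (ghull R'')"
proof -
  let ?C = "{R \<in> Rhombs A. P \<subseteq> ghull R}"
  have fC: "finite ?C" using finite_Rhombs[OF A] by simp
  have nC: "?C \<noteq> {}" using R P by blast
  obtain x where "is_arg_min (\<lambda>R. aff_dim (ghull R)) (\<lambda>x. x \<in> ?C) x"
    using ex_is_arg_min_if_finite[OF fC nC] by blast
  then have "is_arg_min (\<lambda>R. aff_dim (ghull R)) (\<lambda>R. R \<in> Rhombs A \<and> P \<subseteq> ghull R) x" by simp
  then have "\<exists>x. is_arg_min (\<lambda>R. aff_dim (ghull R)) (\<lambda>R. R \<in> Rhombs A \<and> P \<subseteq> ghull R) x" by (rule exI)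
  then have im: "is_arg_min (\<lambda>R. aff_dim (ghull R)) (\<lambda>R. R \<in> Rhombs A \<and> P \<subseteq> ghull R) (min_rhomb A P)"
    unfolding min_rhomb_def arg_min_def by (rule someI_ex)
  then show "min_rhomb A P \<in> Rhombs A" "P \<subseteq> ghull (min_rhomb A P)" unfolding is_arg_min_def by blast+
  show "aff_dim (ghull (min_rhomb A P)) \<le> aff_dim (ghull R'')" if "R'' \<in> Rhombs A" "P \<subseteq> ghull R''" for R''
  proof -
    have "\<not> aff_dim (ghull R'') < aff_dim (ghull (min_rhomb A P))" using im that unfolding is_arg_min_def by blast
    then show ?thesis by simp
  qed
qed

lemma exists_vertex:
  assumes A: "finite A" and p: "p \<in> ghull (rhomb A c \<rho>)"
  shows "\<exists>lo hi. real lo \<le> - snd p \<and> - snd p \<le> real hi \<and>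
           (\<forall>n. lo \<le> n \<and> n \<le> hi \<longrightarrow> (\<exists>v\<in>rhomb A c \<rho>. card v = n))"
proof -
  let ?I = "A_in A c \<rho>" and ?O = "A_on A c \<rho>" and ?R = "rhomb A c \<rho>"
  have fI: "finite ?I" and fO: "finite ?O" using A unfolding A_in_def A_on_def by auto
  have disj: "?I \<inter> ?O = {}" unfolding A_in_def A_on_def by auto
  have cw: "card ?I \<le> card w \<and> card w \<le> card ?I + card ?O" if "w \<in> ?R" for w
  proof -
    have h: "?I \<subseteq> w" "w \<subseteq> ?I \<union> ?O" using that rhomb_mem by blast+
    have "card ?I \<le> card w" by (rule card_mono[OF finite_rhomb_elem[OF A that] h(1)])
    moreover have "card w \<le> card (?I \<union> ?O)" by (rule card_mono[OF finite_UnI[OF fI fO] h(2)])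
    moreover have "card (?I \<union> ?O) = card ?I + card ?O" by (rule card_Un_disjoint[OF fI fO disj])
    ultimately show ?thesis by simp
  qed
  have lo: "(0, 1) \<bullet> p \<le> - real (card ?I)"
  proof (rule hull_le[of "emb ` ?R"])
    show "\<forall>y\<in>emb ` ?R. (0, 1) \<bullet> y \<le> - real (card ?I)" using cw unfolding emb_def by auto
    show "p \<in> convex hull (emb ` ?R)" using p unfolding ghull_def .
  qed
  have hi: "(0, -1) \<bullet> p \<le> real (card ?I + card ?O)"
  proof (rule hull_le[of "emb ` ?R"])
    show "\<forall>y\<in>emb ` ?R. (0, -1) \<bullet> y \<le> real (card ?I + card ?O)"
    proof
      fix y assume "y \<in> emb ` ?R"
      then obtain w where w: "w \<in> ?R" "y = emb w" by blast
      have "card w \<le> card ?I + card ?O" using cw[OF w(1)] by blast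
      then have "real (card w) \<le> real (card ?I + card ?O)" by (simp only: of_nat_le_iff)
      then show "(0, -1) \<bullet> y \<le> real (card ?I + card ?O)" using w(2) unfolding emb_def by simp
    qed
    show "p \<in> convex hull (emb ` ?R)" using p unfolding ghull_def .
  qed
  have vx: "\<exists>v\<in>?R. card v = n" if "card ?I \<le> n" "n \<le> card ?I + card ?O" for n
  proof -
    have "n - card ?I \<le> card ?O" using that by linarith
    then obtain Q where Q: "Q \<subseteq> ?O" "card Q = n - card ?I" "finite Q"
      by (rule obtain_subset_with_card_n)
    have "?I \<union> Q \<in> ?R" unfolding rhomb_mem by (intro conjI Un_upper1 Un_mono subset_refl Q(1))
    moreover have "card (?I \<union> Q) = n"
    proof -
      have "?I \<inter> Q = {}" using disj Q(1) by blast
      then have "card (?I \<union> Q) = card ?I + card Q" by (rule card_Un_disjoint[OF fI Q(3)])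
      then show ?thesis using Q(2) that by simp
    qed
    ultimately show ?thesis by blast
  qed
  have lo': "real (card ?I) \<le> - snd p" using lo by (cases p) simp
  have hi': "- snd p \<le> real (card ?I + card ?O)" using hi by (cases p) simp
  show ?thesis
    by (rule exI[of _ "card ?I"], rule exI[of _ "card ?I + card ?O"]) (use lo' hi' vx in blast)
qed

lemma Rhomb_inter:
  assumes A: "finite A" and p: "\<rho> > 0" "\<rho>' > 0"
    and ne: "rhomb A c \<rho> \<inter> rhomb A c' \<rho>' \<noteq> {}"
  shows "rhomb A c \<rho> \<inter> rhomb A c' \<rho>' \<in> Rhombs A"
proof -
  let ?d = "(dist c c')^2"
  have dge: "?d \<ge> 0" by simp
  then have h1: "2 * (?d + 1) > 0" by (smt (verit))
  define t where "t = min (1/2) (\<rho>^2 / (2 * (?d + 1)))"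
  have h3: "\<rho>^2 / (2 * (?d + 1)) > 0" by (rule divide_pos_pos) (use p h1 in auto)
  have t0: "t > 0" unfolding t_def using h3 by simp
  have t1: "t < 1" unfolding t_def by simp
  have td: "t * ?d < \<rho>^2"
  proof -
    have "t \<le> \<rho>^2 / (2 * (?d + 1))" unfolding t_def by simp
    then have "t * ?d \<le> \<rho>^2 / (2 * (?d + 1)) * ?d" by (rule mult_right_mono) simp
    also have "\<dots> < \<rho>^2"
    proof -
      have "\<rho>^2 / (2 * (?d + 1)) * ?d = \<rho>^2 * (?d / (2 * (?d + 1)))" by simp
      also have "\<dots> < \<rho>^2 * 1"
      proof (rule mult_strict_left_mono)
        have "?d < 2 * (?d + 1)" using dge by (smt (verit))
        then show "?d / (2 * (?d + 1)) < 1" using divide_less_eq_1_pos[OF h1] by blast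
        show "0 < \<rho>^2" using p by simp
      qed
      finally show ?thesis by simp
    qed
    finally show ?thesis .
  qed
  define Q where "Q = (1-t)*\<rho>^2 + t*\<rho>'^2 - t*(1-t)*?d"
  have Qpos: "Q > 0"
  proof -
    have "Q = (1-t) * (\<rho>^2 - t * ?d) + t*\<rho>'^2" unfolding Q_def by (simp add: algebra_simps)
    moreover have "(1-t) * (\<rho>^2 - t * ?d) > 0" using t1 td by simp
    moreover have "t*\<rho>'^2 \<ge> 0" using t0 by simp
    ultimately show ?thesis by linarith
  qed
  have eq: "rhomb A ((1-t) *\<^sub>R c + t *\<^sub>R c') (sqrt Q) = rhomb A c \<rho> \<inter> rhomb A c' \<rho>'"
    using comb[OF A p ne t0 t1 Qpos Q_def] .
  have "sqrt Q > 0" using Qpos by simp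
  then have "rhomb A ((1-t) *\<^sub>R c + t *\<^sub>R c') (sqrt Q) \<in> Rhombs A" unfolding Rhombs_def by blast
  then show ?thesis unfolding eq .
qed


lemma cellverts_E:
  assumes "w \<in> cellverts A P"
  obtains c \<rho> where "\<rho> > 0" "w \<in> rhomb A c \<rho>" "emb w \<in> P" "emb w extreme_point_of P"
proof -
  have h: "w \<in> \<Union>(Rhombs A)" "emb w extreme_point_of P" using assms unfolding cellverts_def by blast+
  then obtain R where R: "R \<in> Rhombs A" "w \<in> R" by blast
  then obtain c \<rho> where "\<rho> > 0" "R = rhomb A c \<rho>" using Rhombs_E by blast
  moreover have "emb w \<in> P" using h(2) unfolding extreme_point_of_def by blast
  ultimately show ?thesis using that R h(2) by blast
qed

lemma finite_cellverts:
  assumes A: "finite A"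
  shows "finite (cellverts A P)"
proof -
  have "cellverts A P \<subseteq> Pow A"
  proof
    fix w assume "w \<in> cellverts A P"
    then obtain c \<rho> where "w \<in> rhomb A c \<rho>" by (rule cellverts_E)
    then show "w \<in> Pow A" using rhomb_sub[of w A c \<rho>] by simp
  qed
  then show ?thesis using A by (meson finite_Pow_iff finite_subset)
qed

lemma emb_snd: "- snd (emb w) = real (card w)"
  unfolding emb_def by simp

lemma part2:
  assumes gp: "gen_pos A" and k: "1 \<le> k" and P: "P \<in> SRhomb A r k"
  shows "\<exists>i\<ge>k. cellverts A P \<in> Del_plus A r i"
proof -
  have A: "finite A" using gp unfolding gen_pos_def by blast
  have PC: "P \<in> SRcells A" "r_cell A P \<le> r" "k \<le> k_cell A P" using P unfolding SRhomb_def by blast+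
  have Pne: "P \<noteq> {}" using PC(1) unfolding SRcells_def by blast
  obtain R j where R: "R \<in> Rhombs A" and Pform: "P = ghull R \<inter> {x. snd x = - real j}
       \<or> P = ghull R \<inter> {x. real j \<le> - snd x \<and> - snd x \<le> real j + 1}"
    using PC(1) unfolding SRcells_def by blast
  obtain c \<rho> where p: "\<rho> > 0" and Req: "R = rhomb A c \<rho>" using Rhombs_E[OF R] by blast
  have PR: "P \<subseteq> ghull R" using Pform by blast
  have Pdepth: "real j \<le> - snd y \<and> - snd y \<le> real j + 1" if "y \<in> P" for y
    using Pform that by auto
  obtain p0 where p0: "p0 \<in> P" using Pne by blast
  have p0R: "p0 \<in> ghull (rhomb A c \<rho>)" using p0 PR Req by blast
  obtain lo hi where lh: "real lo \<le> - snd p0" "- snd p0 \<le> real hi"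
    "\<And>n. lo \<le> n \<Longrightarrow> n \<le> hi \<Longrightarrow> \<exists>v\<in>rhomb A c \<rho>. card v = n"
    using exists_vertex[OF A p0R] by blast
  have embR: "emb v \<in> ghull R" if "v \<in> R" for v unfolding ghull_def using that by (simp add: hull_inc)
  obtain v where v: "v \<in> R" "emb v \<in> P"
  proof (cases "P = ghull R \<inter> {x. snd x = - real j}")
    case True
    then have "- snd p0 = real j" using p0 by simp
    then have "lo \<le> j" "j \<le> hi" using lh(1,2) by simp_all
    then obtain v where "v \<in> rhomb A c \<rho>" "card v = j" using lh(3) by blast
    moreover have "emb v \<in> {x. snd x = - real j}" using \<open>card v = j\<close> emb_snd[of v] by simp
    ultimately show ?thesis using that True embR Req by blast
  next
    case False
    then have PS: "P = ghull R \<inter> {x. real j \<le> - snd x \<and> - snd x \<le> real j + 1}" using Pform by blast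
    then have d: "real j \<le> - snd p0" "- snd p0 \<le> real j + 1" using p0 by simp_all
    let ?n = "max j lo"
    have "real j \<le> real hi" "real lo \<le> real j + 1" using d lh(1,2) by linarith+
    then have "j \<le> hi" "lo \<le> j + 1" by simp_all
    moreover have "lo \<le> hi" using lh(1,2) by simp
    ultimately have "lo \<le> ?n" "?n \<le> hi" "j \<le> ?n" "?n \<le> j + 1" by simp_all
    then obtain v where v: "v \<in> rhomb A c \<rho>" "card v = ?n" using lh(3) by blast
    have "real j \<le> real (card v)" "real (card v) \<le> real j + 1" using v(2) \<open>j \<le> ?n\<close> \<open>?n \<le> j + 1\<close> by simp_all
    then have "emb v \<in> {x. real j \<le> - snd x \<and> - snd x \<le> real j + 1}" using emb_snd[of v] by simp
    then show ?thesis using that PS embR Req v(1) by blast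
  qed
  let ?CV = "cellverts A P"
  have vR: "v \<in> rhomb A c \<rho>" using v(1) Req by simp
  have PR': "P \<subseteq> ghull (rhomb A c \<rho>)" using PR Req by simp
  have "emb v extreme_point_of P" by (rule lemE[OF gp p vR PR' v(2)])
  then have vcv: "v \<in> ?CV" unfolding cellverts_def using v(1) R by blast
  have fCV: "finite ?CV" using finite_cellverts[OF A] .
  have fcCV: "finite (card ` ?CV)" using fCV by simp
  have neCV: "card ` ?CV \<noteq> {}" using vcv by blast
  define i where "i = k_cell A P"
  have iM: "i = Min (card ` ?CV)" unfolding i_def k_cell_def ..
  have ki: "k \<le> i" using PC(3) unfolding i_def .
  have iin: "i \<in> card ` ?CV" unfolding iM by (rule Min_in[OF fcCV neCV])
  have ile: "i \<le> card w" if "w \<in> ?CV" for w unfolding iM using fcCV that by simp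
  have cdepth: "j \<le> card w \<and> card w \<le> j + 1" if w: "w \<in> ?CV" for w
  proof -
    obtain c1 \<rho>1 where "emb w \<in> P" using cellverts_E[OF w] by blast
    then have "real j \<le> real (card w) \<and> real (card w) \<le> real j + 1" using Pdepth emb_snd[of w] by metis
    then show ?thesis by simp
  qed
  have cards: "card w = i \<or> card w = i + 1" if "w \<in> ?CV" for w
  proof -
    obtain w0 where w0: "w0 \<in> ?CV" "i = card w0" using iin by blast
    have "j \<le> i" "i \<le> j + 1" using cdepth[OF w0(1)] w0(2) by simp_all
    moreover have "j \<le> card w" "card w \<le> j + 1" using cdepth[OF that] by simp_all
    moreover have "i \<le> card w" using ile[OF that] .
    ultimately show ?thesis by linarith
  qed
  let ?R' = "min_rhomb A P"
  have R'R: "?R' \<in> Rhombs A" and PR'': "P \<subseteq> ghull ?R'" using min_rhomb_props[OF A R PR] by blast+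
  obtain c' \<rho>' where p': "\<rho>' > 0" and R'eq: "?R' = rhomb A c' \<rho>'" using Rhombs_E[OF R'R] by blast
  have CVR': "w \<in> ?R'" if w: "w \<in> ?CV" for w
  proof -
    obtain c1 \<rho>1 where h: "\<rho>1 > 0" "w \<in> rhomb A c1 \<rho>1" "emb w \<in> P" using cellverts_E[OF w] by blast
    have "emb w \<in> ghull ?R'" using h(3) PR'' by blast
    then have "emb w \<in> ghull (rhomb A c' \<rho>')" unfolding R'eq .
    from lemK[OF A h(1) p' h(2) this] show ?thesis using R'eq by simp
  qed
  have rr: "r_rhomb A ?R' \<le> r" using PC(2) unfolding r_cell_def .
  have "card v \<noteq> 0" using cards[OF vcv] ki k by auto
  then have "v \<noteq> {}" by auto
  then obtain a0 where a0: "a0 \<in> v" by blast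
  obtain x where x: "\<forall>B\<in>?R'. x \<in> BV A r B" using common_point[OF A R'R rr CVR'[OF vcv] a0] by blast
  have "?CV \<in> Del_plus A r i"
    unfolding Del_plus_def Del_plus_vertices_def
  proof (intro CollectI conjI)
    show "?CV \<noteq> {}" using vcv by blast
    show "?CV \<subseteq> {B. B \<subseteq> A \<and> card B \<in> {i, i + 1} \<and> BV A r B \<noteq> {}}"
    proof
      fix w assume w: "w \<in> ?CV"
      obtain c1 \<rho>1 where "w \<in> rhomb A c1 \<rho>1" using cellverts_E[OF w] by blast
      then have "w \<subseteq> A" by (rule rhomb_sub)
      moreover have "card w \<in> {i, i + 1}" using cards[OF w] by simp
      moreover have "x \<in> BV A r w" using x CVR'[OF w] by blast
      ultimately show "w \<in> {B. B \<subseteq> A \<and> card B \<in> {i, i + 1} \<and> BV A r B \<noteq> {}}" by blast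
    qed
    show "(\<Inter>B\<in>?CV. BV A r B) \<noteq> {}" using x CVR' by blast
  qed
  then show ?thesis using ki by blast
qed


lemma rhomb_single:
  assumes "b \<in> A" "\<epsilon> > 0" "\<forall>a\<in>A - {b}. dist a b > \<epsilon>"
  shows "rhomb A b \<epsilon> = {{b}}"
proof -
  have I: "A_in A b \<epsilon> = {b}"
  proof
    show "A_in A b \<epsilon> \<subseteq> {b}"
    proof
      fix a assume a: "a \<in> A_in A b \<epsilon>"
      then have aA: "a \<in> A" and ad: "dist a b < \<epsilon>" unfolding A_in_def by auto
      show "a \<in> {b}"
      proof (rule ccontr)
        assume "a \<notin> {b}"
        then have "a \<in> A - {b}" using aA by blast
        then have "\<epsilon> < dist a b" using assms(3) by blast
        then show False using ad by linarith
      qed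
    qed
    show "{b} \<subseteq> A_in A b \<epsilon>" using assms(1,2) unfolding A_in_def by simp
  qed
  have O: "A_on A b \<epsilon> = {}"
  proof -
    have "a \<notin> A_on A b \<epsilon>" for a
    proof
      assume a: "a \<in> A_on A b \<epsilon>"
      then have "a \<in> A" "dist a b = \<epsilon>" unfolding A_on_def by auto
      moreover then have "a \<noteq> b" using assms(2) by auto
      ultimately show False using assms(3) by fastforce
    qed
    then show ?thesis by blast
  qed
  show ?thesis
  proof (intro set_eqI iffI)
    fix w assume "w \<in> rhomb A b \<epsilon>"
    then have "{b} \<subseteq> w" "w \<subseteq> {b}" unfolding rhomb_mem I O by simp_all
    then show "w \<in> {{b}}" by blast
  next
    fix w assume "w \<in> {{b}}"
    then show "w \<in> rhomb A b \<epsilon>" unfolding rhomb_mem I O by simp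
  qed
qed

lemma part3:
  assumes gp: "gen_pos A" and r0: "0 \<le> r" and k: "1 \<le> k" and ik: "k \<le> i"
    and sig: "\<sigma> \<in> Del_plus A r i"
  shows "\<exists>P\<in>SRhomb A r k. \<sigma> \<subseteq> cellverts A P"
proof -
  have A: "finite A" using gp unfolding gen_pos_def by blast
  have sne: "\<sigma> \<noteq> {}" and sV: "\<sigma> \<subseteq> Del_plus_vertices A r i" and sI: "(\<Inter>B\<in>\<sigma>. BV A r B) \<noteq> {}"
    using sig unfolding Del_plus_def by blast+
  obtain b where b: "\<forall>B\<in>\<sigma>. b \<in> BV A r B" using sI by blast
  have BA: "B \<subseteq> A" and Bc: "card B = i \<or> card B = i + 1" if "B \<in> \<sigma>" for B
    using sV that unfolding Del_plus_vertices_def by blast+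
  have Bne: "B \<noteq> {}" if "B \<in> \<sigma>" for B
  proof
    assume "B = {}"
    then show False using Bc[OF that] ik k by simp
  qed
  have fB: "finite B" if "B \<in> \<sigma>" for B using BA[OF that] A finite_subset by blast
  have bb: "dist b a \<le> r" if "B \<in> \<sigma>" "a \<in> B" for B a
    using b that unfolding BV_def BallR_def by blast
  have bv: "dist b a \<le> dist b a'" if "B \<in> \<sigma>" "a \<in> B" "a' \<in> A - B" for B a a'
    using b that unfolding BV_def Vor_def by blast
  let ?U = "\<Union>\<sigma>"
  have UA: "?U \<subseteq> A" using BA by blast
  have fU: "finite ?U" using UA A finite_subset by blast
  have Une: "?U \<noteq> {}" using sne Bne by blast
  define D where "D = Max ((\<lambda>a. dist a b) ` ?U)"
  have DU: "dist a b \<le> D" if "a \<in> ?U" for a unfolding D_def using fU that by simp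
  obtain e where e: "e \<in> ?U" "dist e b = D"
  proof -
    have "D \<in> (\<lambda>a. dist a b) ` ?U" unfolding D_def using fU Une by simp
    then show ?thesis using that by blast
  qed
  obtain B' where B': "B' \<in> \<sigma>" "e \<in> B'" using e(1) by blast
  have Dr: "D \<le> r" using bb[OF B'] e(2) by (simp add: dist_commute)
  have D0: "D \<ge> 0" using e(2) by (metis zero_le_dist)
  obtain \<rho> where p: "\<rho> > 0" and sR: "\<sigma> \<subseteq> rhomb A b \<rho>"
    and Rad: "\<And>R'. R' \<in> Rhombs A \<Longrightarrow> R' \<subseteq> rhomb A b \<rho> \<Longrightarrow> r_rhomb A R' \<le> r"
  proof (cases "D > 0")
    case True
    have "B \<in> rhomb A b D" if B: "B \<in> \<sigma>" for B
      unfolding rhomb_mem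
    proof
      show "B \<subseteq> A_in A b D \<union> A_on A b D"
      proof
        fix a assume a: "a \<in> B"
        then have "a \<in> A" "dist a b \<le> D" using BA[OF B] DU B by blast+
        then show "a \<in> A_in A b D \<union> A_on A b D" unfolding A_in_def A_on_def by auto
      qed
      show "A_in A b D \<subseteq> B"
      proof
        fix a assume a: "a \<in> A_in A b D"
        then have aA: "a \<in> A" and ad: "dist a b < D" unfolding A_in_def by auto
        show "a \<in> B"
        proof (rule ccontr)
          assume aB: "a \<notin> B"
          have hB: "dist b x \<le> dist b a" if "x \<in> B" for x using bv[OF B that] aA aB by blast
          have aB': "a \<in> B'"
          proof (rule ccontr)
            assume "a \<notin> B'"
            then have "dist b e \<le> dist b a" using bv[OF B'(1) B'(2)] aA by blast
            then show False using ad e(2) by (simp add: dist_commute)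
          qed
          have BB': "B \<subseteq> B'"
          proof
            fix x assume x: "x \<in> B"
            show "x \<in> B'"
            proof (rule ccontr)
              assume "x \<notin> B'"
              then have "dist b e \<le> dist b x" using bv[OF B'(1) B'(2)] BA[OF B] x by blast
              then show False using hB[OF x] ad e(2) by (simp add: dist_commute)
            qed
          qed
          have eB: "e \<notin> B"
          proof
            assume "e \<in> B"
            then have "dist b e \<le> dist b a" using hB by blast
            then show False using ad e(2) by (simp add: dist_commute)
          qed
          have ae: "a \<noteq> e" using ad e(2) by auto
          have sub: "insert a (insert e B) \<subseteq> B'" using aB' B'(2) BB' by blast
          have "card (insert a (insert e B)) = card B + 2" using fB[OF B] aB eB ae by simp
          moreover have "card (insert a (insert e B)) \<le> card B'" using card_mono[OF fB[OF B'(1)] sub] .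
          ultimately have "card B + 2 \<le> card B'" by simp
          then show False using Bc[OF B] Bc[OF B'(1)] by linarith
        qed
      qed
    qed
    then have s1: "\<sigma> \<subseteq> rhomb A b D" by blast
    have "r_rhomb A R' \<le> r" if "R' \<in> Rhombs A" "R' \<subseteq> rhomb A b D" for R'
      using Mrad[OF A that True] Dr by linarith
    then show ?thesis using that True s1 by blast
  next
    case False
    then have DZ: "D = 0" using D0 by simp
    have Ub: "a = b" if "a \<in> ?U" for a using DU[OF that] DZ by simp
    have Bb: "B = {b}" if "B \<in> \<sigma>" for B using Bne[OF that] Ub that by blast
    have bA: "b \<in> A" using Bb[OF B'(1)] BA[OF B'(1)] by blast
    define \<rho>0 where "\<rho>0 = (if A - {b} = {} then 1 else Min ((\<lambda>a. dist a b) ` (A - {b})) / 2)"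
    have far: "\<rho>0 > 0 \<and> (\<forall>a\<in>A - {b}. dist a b > \<rho>0)"
    proof (cases "A - {b} = {}")
      case True
      then show ?thesis unfolding \<rho>0_def by auto
    next
      case False
      let ?M = "Min ((\<lambda>a. dist a b) ` (A - {b}))"
      have fin: "finite ((\<lambda>a. dist a b) ` (A - {b}))" using A by simp
      have ne: "(\<lambda>a. dist a b) ` (A - {b}) \<noteq> {}" using False by simp
      have Mle: "?M \<le> dist a b" if "a \<in> A - {b}" for a using fin that by simp
      have "?M \<in> (\<lambda>a. dist a b) ` (A - {b})" using Min_in[OF fin ne] .
      then have Mpos: "?M > 0" by auto
      have r0e: "\<rho>0 = ?M / 2" unfolding \<rho>0_def using False by simp
      have "?M / 2 < dist a b" if "a \<in> A - {b}" for a using Mle[OF that] Mpos by linarith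
      then show ?thesis unfolding r0e using Mpos by simp
    qed
    have rs: "rhomb A b \<epsilon> = {{b}}" if "0 < \<epsilon>" "\<epsilon> \<le> \<rho>0" for \<epsilon>
    proof (rule rhomb_single[OF bA that(1)])
      show "\<forall>a\<in>A - {b}. \<epsilon> < dist a b"
      proof
        fix a assume "a \<in> A - {b}"
        then have "\<rho>0 < dist a b" using far by blast
        then show "\<epsilon> < dist a b" using that(2) by linarith
      qed
    qed
    have s1: "\<sigma> \<subseteq> rhomb A b \<rho>0" using rs[of \<rho>0] far Bb by auto
    have "r_rhomb A R' \<le> r" if R': "R' \<in> Rhombs A" "R' \<subseteq> rhomb A b \<rho>0" for R'
    proof -
      have "r_rhomb A R' \<le> 0 + e" if e: "e > 0" for e
      proof -
        let ?\<epsilon> = "min e \<rho>0"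
        have pos: "?\<epsilon> > 0" using e far by simp
        have "rhomb A b ?\<epsilon> = rhomb A b \<rho>0" using rs[of ?\<epsilon>] rs[of \<rho>0] far e by simp
        then have sub: "R' \<subseteq> rhomb A b ?\<epsilon>" using R'(2) by simp
        have "r_rhomb A R' \<le> ?\<epsilon>" by (rule Mrad[OF A R'(1) sub pos])
        moreover have "?\<epsilon> \<le> e" by simp
        ultimately show ?thesis by linarith
      qed
      then have "r_rhomb A R' \<le> 0" by (rule field_le_epsilon)
      then show ?thesis using r0 by simp
    qed
    then show ?thesis using that far s1 by blast
  qed
  let ?R = "rhomb A b \<rho>"
  have RR: "?R \<in> Rhombs A" unfolding Rhombs_def using p by blast
  define P where "P = ghull ?R \<inter> {x. real i \<le> - snd x \<and> - snd x \<le> real i + 1}"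
  have PR: "P \<subseteq> ghull ?R" unfolding P_def by blast
  have embP: "emb B \<in> P" if B: "B \<in> \<sigma>" for B
  proof -
    have "emb B \<in> ghull ?R" unfolding ghull_def using sR B by (simp add: hull_inc subset_iff)
    moreover have "real i \<le> real (card B) \<and> real (card B) \<le> real i + 1" using Bc[OF B] by auto
    ultimately show ?thesis unfolding P_def using emb_snd[of B] by simp
  qed
  have sCV: "\<sigma> \<subseteq> cellverts A P"
  proof
    fix B assume B: "B \<in> \<sigma>"
    have BR: "B \<in> ?R" using sR B by blast
    have "emb B extreme_point_of P" by (rule lemE[OF gp p BR PR embP[OF B]])
    then show "B \<in> cellverts A P" unfolding cellverts_def using BR RR by blast
  qed
  obtain B0 where B0: "B0 \<in> \<sigma>" using sne by blast
  have PSR: "P \<in> SRcells A"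
  proof -
    have "P \<noteq> {}" using embP[OF B0] by blast
    then show ?thesis unfolding SRcells_def P_def using RR by blast
  qed
  let ?CV = "cellverts A P"
  have fcCV: "finite (card ` ?CV)" using finite_cellverts[OF A] by simp
  have neCV: "card ` ?CV \<noteq> {}" using sCV B0 by blast
  have kcell: "k \<le> k_cell A P"
  proof -
    have "Min (card ` ?CV) \<in> card ` ?CV" by (rule Min_in[OF fcCV neCV])
    then obtain w where w: "w \<in> ?CV" "k_cell A P = card w" unfolding k_cell_def by blast
    obtain c1 \<rho>1 where "emb w \<in> P" using cellverts_E[OF w(1)] by blast
    then have "real i \<le> real (card w)" unfolding P_def using emb_snd[of w] by simp
    then show ?thesis using w(2) ik by simp
  qed
  let ?R' = "min_rhomb A P"
  have R'R: "?R' \<in> Rhombs A" and PR'': "P \<subseteq> ghull ?R'"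
    and mind: "\<And>R''. R'' \<in> Rhombs A \<Longrightarrow> P \<subseteq> ghull R'' \<Longrightarrow> aff_dim (ghull ?R') \<le> aff_dim (ghull R'')"
    using min_rhomb_props[OF A RR PR] by blast+
  obtain c' \<rho>' where p': "\<rho>' > 0" and R'eq: "?R' = rhomb A c' \<rho>'" using Rhombs_E[OF R'R] by blast
  have sR': "\<sigma> \<subseteq> ?R'"
  proof
    fix B assume B: "B \<in> \<sigma>"
    have "emb B \<in> ghull ?R'" using embP[OF B] PR'' by blast
    then have "emb B \<in> ghull (rhomb A c' \<rho>')" unfolding R'eq .
    from lemK[OF A p p' _ this] sR B show "B \<in> ?R'" unfolding R'eq by blast
  qed
  let ?X = "?R \<inter> rhomb A c' \<rho>'"
  have Xne: "?X \<noteq> {}" using sR sR' B0 R'eq by blast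
  have XR: "?X \<in> Rhombs A" by (rule Rhomb_inter[OF A p p' Xne])
  have PX: "P \<subseteq> ghull ?X"
  proof
    fix y assume y: "y \<in> P"
    have y1: "y \<in> ghull ?R" using y PR by blast
    have "y \<in> ghull ?R'" using y PR'' by blast
    then have y2: "y \<in> ghull (rhomb A c' \<rho>')" unfolding R'eq .
    show "y \<in> ghull ?X" by (rule lem_inter[OF A p p' y1 y2])
  qed
  have md: "aff_dim (ghull (rhomb A c' \<rho>')) \<le> aff_dim (ghull ?X)" using mind[OF XR PX] unfolding R'eq .
  have R'sub: "rhomb A c' \<rho>' \<subseteq> ?R"
  proof (rule ccontr)
    assume "\<not> rhomb A c' \<rho>' \<subseteq> ?R"
    then obtain w where w: "w \<in> rhomb A c' \<rho>'" "w \<notin> ?R" by blast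
    let ?L = "Lvec b \<rho> c' \<rho>'"
    let ?m = "Hs b \<rho> (A_in A b \<rho>)" and ?m' = "Hs c' \<rho>' (A_in A c' \<rho>')"
    have onX: "?L \<bullet> y = ?m - ?m'" if "y \<in> emb ` ?X" for y
    proof -
      obtain z where z: "z \<in> ?R" "z \<in> rhomb A c' \<rho>'" "y = emb z" using \<open>y \<in> emb ` ?X\<close> by blast
      have fz: "finite z" using finite_rhomb_elem[OF A z(1)] .
      show ?thesis using Hs_diff[OF fz, of b \<rho> c' \<rho>'] Hs_in[OF A p z(1)] Hs_in[OF A p' z(2)] z(3) by simp
    qed
    have fw: "finite w" using finite_rhomb_elem[OF A w(1)] .
    have wA: "w \<subseteq> A" using rhomb_sub[OF w(1)] .
    have "\<not> (\<forall>w'\<subseteq>A. Hs b \<rho> w \<le> Hs b \<rho> w')" using w(2) rhomb_char[OF A p] wA by blast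
    then obtain w' where w': "w' \<subseteq> A" "\<not> Hs b \<rho> w \<le> Hs b \<rho> w'" by blast
    have "?m \<le> Hs b \<rho> w'" using Hs_min(1)[OF A w'(1) p, where c=b] .
    then have gt: "Hs b \<rho> w > ?m" using w'(2) by linarith
    have Lw: "?L \<bullet> emb w > ?m - ?m'" using Hs_diff[OF fw, of b \<rho> c' \<rho>'] Hs_in[OF A p' w(1)] gt by simp
    have AH: "affine hull (emb ` ?X) \<subseteq> {y. ?L \<bullet> y = ?m - ?m'}"
    proof (rule hull_minimal)
      show "emb ` ?X \<subseteq> {y. ?L \<bullet> y = ?m - ?m'}" using onX by blast
      show "affine {y. ?L \<bullet> y = ?m - ?m'}" by (rule affine_hyperplane)
    qed
    have n1: "emb w \<notin> affine hull (emb ` ?X)" using AH Lw by fastforce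
    have n2: "emb w \<in> affine hull (emb ` rhomb A c' \<rho>')" using w(1) by (simp add: hull_inc)
    have sub: "affine hull (emb ` ?X) \<subseteq> affine hull (emb ` rhomb A c' \<rho>')"
      by (rule hull_mono) blast
    have "affine hull (emb ` ?X) \<subset> affine hull (emb ` rhomb A c' \<rho>')" using sub n1 n2 by blast
    then have "aff_dim (emb ` ?X) < aff_dim (emb ` rhomb A c' \<rho>')" by (rule aff_dim_psubset)
    then have "aff_dim (ghull ?X) < aff_dim (ghull (rhomb A c' \<rho>'))"
      unfolding ghull_def aff_dim_convex_hull .
    then show False using md by simp
  qed
  have "r_rhomb A ?R' \<le> r" using Rad[OF R'R] R'sub R'eq by simp
  then have rcell: "r_cell A P \<le> r" unfolding r_cell_def .
  have "P \<in> SRhomb A r k" unfolding SRhomb_def using PSR rcell kcell by blast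
  then show ?thesis using sCV by blast
qed


theorem lemma7:
  fixes A :: "'a::euclidean_space set" and r :: real and k :: nat
  assumes "gen_pos A" and "0 \<le> r" and "1 \<le> k"
  shows "SRhomb_vertices A r k = SDel_vertices A r k
    \<and> (\<forall>P\<in>SRhomb A r k. cellverts A P \<in> SDel A r k)
    \<and> (\<forall>\<sigma>\<in>SDel A r k. \<exists>P\<in>SRhomb A r k. \<sigma> \<subseteq> cellverts A P)"
proof -
  have p2: "\<exists>i\<ge>k. cellverts A P \<in> Del_plus A r i" if "P \<in> SRhomb A r k" for P
    using part2[OF assms(1) assms(3) that] .
  have p3: "\<exists>P\<in>SRhomb A r k. \<sigma> \<subseteq> cellverts A P" if "k \<le> i" "\<sigma> \<in> Del_plus A r i" for i \<sigma>
    using part3[OF assms that] .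
  have c1: "SRhomb_vertices A r k = SDel_vertices A r k"
  proof
    show "SRhomb_vertices A r k \<subseteq> SDel_vertices A r k"
    proof
      fix v assume "v \<in> SRhomb_vertices A r k"
      then obtain P where P: "P \<in> SRhomb A r k" "v \<in> cellverts A P" unfolding SRhomb_vertices_def by blast
      obtain i where i: "k \<le> i" "cellverts A P \<in> Del_plus A r i" using p2[OF P(1)] by blast
      then have "cellverts A P \<subseteq> Del_plus_vertices A r i" unfolding Del_plus_def by blast
      then have "v \<in> Del_plus_vertices A r i" using P(2) by blast
      then show "v \<in> SDel_vertices A r k" unfolding SDel_vertices_def using i(1) by blast
    qed
    show "SDel_vertices A r k \<subseteq> SRhomb_vertices A r k"
    proof
      fix v assume "v \<in> SDel_vertices A r k"
      then obtain i where i: "k \<le> i" "v \<in> Del_plus_vertices A r i" unfolding SDel_vertices_def by blast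
      have "BV A r v \<noteq> {}" using i(2) unfolding Del_plus_vertices_def by blast
      then have "{v} \<in> Del_plus A r i" unfolding Del_plus_def using i(2) by simp
      then obtain P where "P \<in> SRhomb A r k" "{v} \<subseteq> cellverts A P" using p3[OF i(1)] by blast
      then show "v \<in> SRhomb_vertices A r k" unfolding SRhomb_vertices_def by blast
    qed
  qed
  have c2: "\<forall>P\<in>SRhomb A r k. cellverts A P \<in> SDel A r k"
  proof
    fix P assume "P \<in> SRhomb A r k"
    then obtain i where "k \<le> i" "cellverts A P \<in> Del_plus A r i" using p2 by blast
    then show "cellverts A P \<in> SDel A r k" unfolding SDel_def by blast
  qed
  have c3: "\<forall>\<sigma>\<in>SDel A r k. \<exists>P\<in>SRhomb A r k. \<sigma> \<subseteq> cellverts A P"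
  proof
    fix \<sigma> assume "\<sigma> \<in> SDel A r k"
    then obtain i where "k \<le> i" "\<sigma> \<in> Del_plus A r i" unfolding SDel_def by blast
    then show "\<exists>P\<in>SRhomb A r k. \<sigma> \<subseteq> cellverts A P" using p3 by blast
  qed
  show ?thesis using c1 c2 c3 by blast
qed

end
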